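(* There exist a finite atom set $\Phi$, a finite agent set $I$, a logic $\Lambda$, an $\boldsymbol{\mathcal{L}}_\Lambda$ modal space $\boldsymbol{X}$ and a clean map $\boldsymbol{f}$ on $\boldsymbol{X}$ induced by a finite, static multi-pointed action model that is not Boolean, such that $\boldsymbol{f}$ exhibits nontrivial recurrence (with respect to the Stone topology): there is $\boldsymbol{x}\in\boldsymbol{X}$ whose orbit $\mathcal{O}_{\boldsymbol{f}}(\boldsymbol{x})$ is not periodic and contains a recurrent point.
   Context: Setting: atom set $\Phi$, finite agent set $I$, modal language $\mathcal{L}$ ($\varphi::=\top\mid p\mid\neg\varphi\mid\varphi\wedge\varphi\mid\square_i\varphi$), logic $\Lambda$ a normal modal logic extending $K$, $\boldsymbol{\mathcal{L}}_\Lambda$ the set of $\Lambda$-equivalence classes of formulas. For a set $X$ of pointed Kripke models (countable nonempty state sets, standard semantics), the modal space is $\boldsymbol{X}=\{\boldsymbol{x}:x\in X\}$, $\boldsymbol{x}=\{y\in X:y,x\text{ satisfy the same formulas}\}$, with the Stone topology generated by the sets $\{\boldsymbol{x}:x\vDash\varphi\}$. Clean map: induced via product update $x\mapsto x\otimes\Sigma\Gamma$ by a multi-pointed action model $\Sigma\Gamma=(\llbracket\Sigma\rrbracket,\mathsf{R},pre,post,\Gamma)$ (countable action set, relations $\mathsf{R}_i$, preconditions in $\mathcal{L}$, postconditions $\top$ or conjunctions of literals over $\Phi$, designated set $\emptyset\ne\Gamma\subseteq\llbracket\Sigma\rrbracket$) that is precondition finite, exhaustive, deterministic and closing over $X$ (every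 $x\in X$ satisfies $pre(\sigma)$ for exactly one $\sigma\in\Gamma$, finitely many preconditions up to equivalence, and $x\otimes\Sigma\Gamma\in X$). Product update: states $(s,\sigma)$ with $Ms\vDash pre(\sigma)$, relations componentwise, $p$ true at $(s,\sigma)$ iff $post(\sigma)\vDash p$, or $s\in\llbracket p\rrbracket$ and $post(\sigma)\nvDash\neg p$; designated state $(s,\sigma)$ for the applicable $\sigma\in\Gamma$. $\boldsymbol{f}(\boldsymbol{x})$ is the class of $x\otimes\Sigma\Gamma$. $\Sigma\Gamma$ is finite if $\llbracket\Sigma\rrbracket$ is finite, Boolean if every precondition is a Boolean (modality-free) formula, static if every postcondition is $\top$. Orbit: $\mathcal{O}_{\boldsymbol{f}}(\boldsymbol{x})=\{\boldsymbol{f}^n(\boldsymbol{x}):n\in\mathbb{N}_0\}$; it is periodic if $\boldsymbol{f}^{n+k}(\boldsymbol{x})=\boldsymbol{f}^n(\boldsymbol{x})$ for some $n\ge0,k>0$. The limit set $\omega_{\boldsymbol{f}}(\boldsymbol{y})$ is the set of limits of convergent subsequences $\boldsymbol{f}^{n_1}(\boldsymbol{y}),\boldsymbol{f}^{n_2}(\boldsymbol{y}),\dots$ ($n_1<n_2<\cdots$); $\boldsymbol{y}$ is recurrent if $\boldsymbol{y}\in\omega_{\boldsymbol{f}}(\boldsymbol{y})$. *)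

theory Defs
  imports "HOL-Analysis.Analysis" "HOL-Library.Nat_Bijection"
begin

(* atoms and agents are natural numbers; the atom set Phi and agent set I are
   finite subsets of nat, and the language L is the set of formulas using only
   atoms from Phi and agents from I *)
datatype fm = Top | Atom nat | Neg fm | Conj fm fm | Box nat fm

definition Imp :: "fm \<Rightarrow> fm \<Rightarrow> fm" where
  "Imp a b = Neg (Conj a (Neg b))"

definition Iff :: "fm \<Rightarrow> fm \<Rightarrow> fm" where
  "Iff a b = Conj (Imp a b) (Imp b a)"

fun in_lang :: "nat set \<Rightarrow> nat set \<Rightarrow> fm \<Rightarrow> bool" where
  "in_lang Phi I Top = True"
| "in_lang Phi I (Atom p) = (p \<in> Phi)"
| "in_lang Phi I (Neg a) = in_lang Phi I a"
| "in_lang Phi I (Conj a b) = (in_lang Phi I a \<and> in_lang Phi I b)"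
| "in_lang Phi I (Box i a) = (i \<in> I \<and> in_lang Phi I a)"

fun boolean :: "fm \<Rightarrow> bool" where
  "boolean Top = True"
| "boolean (Atom p) = True"
| "boolean (Neg a) = boolean a"
| "boolean (Conj a b) = (boolean a \<and> boolean b)"
| "boolean (Box i a) = False"

(* propositional evaluation treating atoms and boxed formulas as propositional letters *)
fun peval :: "(fm \<Rightarrow> bool) \<Rightarrow> fm \<Rightarrow> bool" where
  "peval v Top = True"
| "peval v (Atom p) = v (Atom p)"
| "peval v (Neg a) = (\<not> peval v a)"
| "peval v (Conj a b) = (peval v a \<and> peval v b)"
| "peval v (Box i a) = v (Box i a)"

definition tautology :: "fm \<Rightarrow> bool" where
  "tautology a = (\<forall>v. peval v a)"

fun subst :: "(nat \<Rightarrow> fm) \<Rightarrow> fm \<Rightarrow> fm" where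
  "subst s Top = Top"
| "subst s (Atom p) = s p"
| "subst s (Neg a) = Neg (subst s a)"
| "subst s (Conj a b) = Conj (subst s a) (subst s b)"
| "subst s (Box i a) = Box i (subst s a)"

definition normal_logic :: "nat set \<Rightarrow> nat set \<Rightarrow> fm set \<Rightarrow> bool" where
  "normal_logic Phi I Lam \<longleftrightarrow>
     Lam \<subseteq> {a. in_lang Phi I a}
   \<and> (\<forall>a. in_lang Phi I a \<and> tautology a \<longrightarrow> a \<in> Lam)
   \<and> (\<forall>i\<in>I. \<forall>a b. in_lang Phi I a \<and> in_lang Phi I b \<longrightarrow>
        Imp (Box i (Imp a b)) (Imp (Box i a) (Box i b)) \<in> Lam)
   \<and> (\<forall>a b. a \<in> Lam \<and> Imp a b \<in> Lam \<longrightarrow> b \<in> Lam)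
   \<and> (\<forall>i\<in>I. \<forall>a\<in>Lam. Box i a \<in> Lam)
   \<and> (\<forall>s a. a \<in> Lam \<and> (\<forall>p\<in>Phi. in_lang Phi I (s p)) \<longrightarrow> subst s a \<in> Lam)"

definition lequiv :: "fm set \<Rightarrow> fm \<Rightarrow> fm \<Rightarrow> bool" where
  "lequiv Lam a b = (Iff a b \<in> Lam)"

record kripke =
  W :: "nat set"
  Rel :: "nat \<Rightarrow> nat \<Rightarrow> nat \<Rightarrow> bool"   (* Rel i s t : agent i, from s to t *)
  Val :: "nat \<Rightarrow> nat set"

type_synonym pointed = "kripke \<times> nat"

fun sat :: "kripke \<Rightarrow> nat \<Rightarrow> fm \<Rightarrow> bool" where
  "sat M s Top = True"
| "sat M s (Atom p) = (s \<in> Val M p)"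
| "sat M s (Neg a) = (\<not> sat M s a)"
| "sat M s (Conj a b) = (sat M s a \<and> sat M s b)"
| "sat M s (Box i a) = (\<forall>t. t \<in> W M \<and> Rel M i s t \<longrightarrow> sat M t a)"

definition psat :: "pointed \<Rightarrow> fm \<Rightarrow> bool" where
  "psat x a = sat (fst x) (snd x) a"

record amodel =
  Act :: "nat set"
  ARel :: "nat \<Rightarrow> nat \<Rightarrow> nat \<Rightarrow> bool"
  pre :: "nat \<Rightarrow> fm"
  post :: "nat \<Rightarrow> fm"
  Des :: "nat set"

fun beval :: "(nat \<Rightarrow> bool) \<Rightarrow> fm \<Rightarrow> bool" where
  "beval v Top = True"
| "beval v (Atom p) = v p"
| "beval v (Neg a) = (\<not> beval v a)"
| "beval v (Conj a b) = (beval v a \<and> beval v b)"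
| "beval v (Box i a) = False"

definition bentails :: "fm \<Rightarrow> fm \<Rightarrow> bool" where
  "bentails a b = (\<forall>v. beval v a \<longrightarrow> beval v b)"

fun lit_conj :: "nat set \<Rightarrow> fm \<Rightarrow> bool" where
  "lit_conj Phi (Atom p) = (p \<in> Phi)"
| "lit_conj Phi (Neg (Atom p)) = (p \<in> Phi)"
| "lit_conj Phi (Conj a b) = (lit_conj Phi a \<and> lit_conj Phi b)"
| "lit_conj Phi _ = False"

definition post_ok :: "nat set \<Rightarrow> fm \<Rightarrow> bool" where
  "post_ok Phi a = (a = Top \<or> lit_conj Phi a)"

(* product update; the state (t, sigma) is represented by prod_encode (t, sigma) *)
definition upd_model :: "amodel \<Rightarrow> kripke \<Rightarrow> kripke" where
  "upd_model A M =
     \<lparr> W = {prod_encode (t, \<sigma>) | t \<sigma>. t \<in> W M \<and> \<sigma> \<in> Act A \<and> sat M t (pre A \<sigma>)},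
       Rel = (\<lambda>i u v. Rel M i (fst (prod_decode u)) (fst (prod_decode v))
                      \<and> ARel A i (snd (prod_decode u)) (snd (prod_decode v))),
       Val = (\<lambda>p. {u. bentails (post A (snd (prod_decode u))) (Atom p)
                     \<or> (fst (prod_decode u) \<in> Val M p
                        \<and> \<not> bentails (post A (snd (prod_decode u))) (Neg (Atom p)))}) \<rparr>"

definition upd :: "amodel \<Rightarrow> pointed \<Rightarrow> pointed" where
  "upd A x = (upd_model A (fst x),
              prod_encode (snd x, THE \<sigma>. \<sigma> \<in> Des A \<and> psat x (pre A \<sigma>)))"

definition model_space :: "nat set \<Rightarrow> nat set \<Rightarrow> fm set \<Rightarrow> pointed set \<Rightarrow> bool" where
  "model_space Phi I Lam X \<longleftrightarrow>
     (\<forall>x\<in>X. snd x \<in> W (fst x)) \<and> (\<forall>x\<in>X. \<forall>a\<in>Lam. psat x a)"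

definition meq :: "nat set \<Rightarrow> nat set \<Rightarrow> pointed \<Rightarrow> pointed \<Rightarrow> bool" where
  "meq Phi I x y = (\<forall>a. in_lang Phi I a \<longrightarrow> (psat x a \<longleftrightarrow> psat y a))"

definition cls :: "nat set \<Rightarrow> nat set \<Rightarrow> pointed set \<Rightarrow> pointed \<Rightarrow> pointed set" where
  "cls Phi I X x = {y \<in> X. meq Phi I y x}"

definition mspace :: "nat set \<Rightarrow> nat set \<Rightarrow> pointed set \<Rightarrow> pointed set set" where
  "mspace Phi I X = cls Phi I X ` X"

definition basic :: "nat set \<Rightarrow> nat set \<Rightarrow> pointed set \<Rightarrow> fm \<Rightarrow> pointed set set" where
  "basic Phi I X a = {cls Phi I X x | x. x \<in> X \<and> psat x a}"

definition stone :: "nat set \<Rightarrow> nat set \<Rightarrow> pointed set \<Rightarrow> pointed set topology" where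
  "stone Phi I X = topology (\<lambda>U. U \<subseteq> mspace Phi I X \<and>
      (\<forall>c\<in>U. \<exists>a. in_lang Phi I a \<and> c \<in> basic Phi I X a \<and> basic Phi I X a \<subseteq> U))"

definition clean :: "nat set \<Rightarrow> nat set \<Rightarrow> fm set \<Rightarrow> pointed set \<Rightarrow> amodel \<Rightarrow> bool" where
  "clean Phi I Lam X A \<longleftrightarrow>
     Des A \<noteq> {} \<and> Des A \<subseteq> Act A
   \<and> (\<forall>\<sigma>\<in>Act A. in_lang Phi I (pre A \<sigma>) \<and> post_ok Phi (post A \<sigma>))
   \<and> finite ((\<lambda>\<sigma>. {b. in_lang Phi I b \<and> lequiv Lam (pre A \<sigma>) b}) ` Act A)
   \<and> (\<forall>x\<in>X. \<exists>!\<sigma>. \<sigma> \<in> Des A \<and> psat x (pre A \<sigma>))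
   \<and> (\<forall>x\<in>X. upd A x \<in> X)"

definition finite_am :: "amodel \<Rightarrow> bool" where
  "finite_am A = finite (Act A)"

definition static_am :: "amodel \<Rightarrow> bool" where
  "static_am A = (\<forall>\<sigma>\<in>Act A. post A \<sigma> = Top)"

definition boolean_am :: "amodel \<Rightarrow> bool" where
  "boolean_am A = (\<forall>\<sigma>\<in>Act A. boolean (pre A \<sigma>))"

definition fmap :: "nat set \<Rightarrow> nat set \<Rightarrow> pointed set \<Rightarrow> amodel \<Rightarrow> pointed set \<Rightarrow> pointed set" where
  "fmap Phi I X A c = cls Phi I X (upd A (SOME x. x \<in> c))"

definition periodic_orbit :: "(pointed set \<Rightarrow> pointed set) \<Rightarrow> pointed set \<Rightarrow> bool" where
  "periodic_orbit f c = (\<exists>n k. k > 0 \<and> (f ^^ (n + k)) c = (f ^^ n) c)"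

definition omega_set :: "pointed set topology \<Rightarrow> (pointed set \<Rightarrow> pointed set) \<Rightarrow> pointed set \<Rightarrow> pointed set set" where
  "omega_set T f c = {l. \<exists>r. strict_mono r \<and> limitin T (\<lambda>n. (f ^^ (r n)) c) l sequentially}"

definition recurrent :: "pointed set topology \<Rightarrow> (pointed set \<Rightarrow> pointed set) \<Rightarrow> pointed set \<Rightarrow> bool" where
  "recurrent T f c = (c \<in> omega_set T f c)"

end

theory Submission
  imports Defs "HOL-Library.Infinite_Set"
begin

definition Lam0 :: "nat set \<Rightarrow> nat set \<Rightarrow> fm set" where
  "Lam0 Phi I = {a. in_lang Phi I a \<and> (\<forall>M s. sat M s a)}"

lemma peval_sat: "peval (\<lambda>b. sat M s b) a = sat M s a"
  by (induction a) auto

lemma subst_lang: "in_lang Phi I a \<Longrightarrow> (\<forall>p\<in>Phi. in_lang Phi I (s p)) \<Longrightarrow> in_lang Phi I (subst s a)"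
  by (induction a) auto

lemma subst_sat: "sat M t (subst s a) = sat (M\<lparr>Val := (\<lambda>p. {u. sat M u (s p)})\<rparr>) t a"
  by (induction a arbitrary: t) auto

lemma normal_Lam0: "normal_logic Phi I (Lam0 Phi I)"
  unfolding normal_logic_def Lam0_def
proof (intro conjI)
  show "\<forall>a. in_lang Phi I a \<and> tautology a \<longrightarrow> a \<in> {a. in_lang Phi I a \<and> (\<forall>M s. sat M s a)}"
    by (auto simp: tautology_def) (metis peval_sat)
  show "\<forall>s a. a \<in> {a. in_lang Phi I a \<and> (\<forall>M s. sat M s a)} \<and> (\<forall>p\<in>Phi. in_lang Phi I (s p)) \<longrightarrow>
        subst s a \<in> {a. in_lang Phi I a \<and> (\<forall>M s. sat M s a)}"
    using subst_lang subst_sat by auto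
qed (auto simp: Imp_def)

fun chn :: "kripke \<Rightarrow> nat \<Rightarrow> nat \<Rightarrow> bool" where
  "chn M t 0 = (\<forall>i u. u \<in> W M \<longrightarrow> \<not> Rel M i t u)"
| "chn M t (Suc n) = ((\<forall>i. \<exists>u\<in>W M. Rel M i t u) \<and> (\<forall>i u. u \<in> W M \<and> Rel M i t u \<longrightarrow> chn M u n))"

fun csat :: "nat \<Rightarrow> fm \<Rightarrow> bool" where
  "csat n Top = True"
| "csat n (Atom p) = False"
| "csat n (Neg a) = (\<not> csat n a)"
| "csat n (Conj a b) = (csat n a \<and> csat n b)"
| "csat n (Box i a) = (case n of 0 \<Rightarrow> True | Suc m \<Rightarrow> csat m a)"

fun rsat :: "nat set \<Rightarrow> fm \<Rightarrow> bool" where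
  "rsat T Top = True"
| "rsat T (Atom p) = False"
| "rsat T (Neg a) = (\<not> rsat T a)"
| "rsat T (Conj a b) = (rsat T a \<and> rsat T b)"
| "rsat T (Box i a) = (\<forall>n\<in>T. csat n a)"

definition rootp :: "kripke \<Rightarrow> nat \<Rightarrow> nat set \<Rightarrow> bool" where
  "rootp M t T = ((\<forall>i u. u \<in> W M \<and> Rel M i t u \<longrightarrow> (\<exists>n\<in>T. chn M u n))
     \<and> (\<forall>n\<in>T. \<forall>i. \<exists>u\<in>W M. Rel M i t u \<and> chn M u n))"

lemma chn_sat: "(\<forall>p. Val M p = {}) \<Longrightarrow> chn M t n \<Longrightarrow> sat M t a = csat n a"
proof (induction a arbitrary: t n)
  case (Box i a)
  show ?case
  proof (cases n)
    case 0 then show ?thesis using Box.prems by auto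
  next
    case (Suc m)
    then have h: "\<exists>u\<in>W M. Rel M i t u" "\<And>u. u \<in> W M \<Longrightarrow> Rel M i t u \<Longrightarrow> chn M u m"
      using Box.prems by auto
    have "sat M u a = csat m a" if "u \<in> W M" "Rel M i t u" for u
      using Box.IH[OF Box.prems(1) h(2)[OF that]] .
    then show ?thesis using h(1) Suc by auto
  qed
qed auto

lemma root_sat: "(\<forall>p. Val M p = {}) \<Longrightarrow> rootp M t T \<Longrightarrow> sat M t a = rsat T a"
proof (induction a)
  case (Box i a)
  have r1: "\<And>u. u \<in> W M \<Longrightarrow> Rel M i t u \<Longrightarrow> \<exists>n\<in>T. chn M u n"
   and r2: "\<And>n. n \<in> T \<Longrightarrow> \<exists>u\<in>W M. Rel M i t u \<and> chn M u n"
    using Box.prems unfolding rootp_def by blast+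
  show ?case
  proof
    assume s: "sat M t (Box i a)"
    show "rsat T (Box i a)"
    proof (simp, intro ballI)
      fix n assume "n \<in> T"
      then obtain u where "u \<in> W M" "Rel M i t u" "chn M u n" using r2 by blast
      then show "csat n a" using s chn_sat[OF Box.prems(1)] by auto
    qed
  next
    assume s: "rsat T (Box i a)"
    show "sat M t (Box i a)"
    proof (simp, intro allI impI)
      fix u assume "u \<in> W M \<and> Rel M i t u"
      then obtain n where "n \<in> T" "chn M u n" using r1 by blast
      then show "sat M u a" using s chn_sat[OF Box.prems(1)] by auto
    qed
  qed
qed auto

definition dtop :: fm where "dtop = Neg (Box 0 (Neg Top))"

definition A0 :: amodel where
  "A0 = \<lparr>Act = {0}, ARel = (\<lambda>i a b. True), pre = (\<lambda>\<sigma>. dtop), post = (\<lambda>\<sigma>. Top), Des = {0}\<rparr>"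

lemma W_upd: "v \<in> W (upd_model A0 M) \<longleftrightarrow> (\<exists>t. v = prod_encode (t, 0) \<and> t \<in> W M \<and> sat M t dtop)"
  by (auto simp: upd_model_def A0_def)

lemma Rel_upd: "Rel (upd_model A0 M) i (prod_encode (t, 0)) (prod_encode (u, 0)) = Rel M i t u"
  by (simp add: upd_model_def A0_def)

lemma Val_upd: "(\<forall>p. Val M p = {}) \<Longrightarrow> Val (upd_model A0 M) p = {}"
  by (auto simp: upd_model_def A0_def bentails_def)

lemma sat_dtop: "sat M t dtop = (\<exists>u. u \<in> W M \<and> Rel M 0 t u)"
  by (simp add: dtop_def)

lemma upd_chn: "t \<in> W M \<Longrightarrow> chn M t (Suc n) \<Longrightarrow> chn (upd_model A0 M) (prod_encode (t, 0)) n"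
proof (induction n arbitrary: t)
  case 0
  show ?case
  proof (simp, intro allI impI)
    fix i u assume "u \<in> W (upd_model A0 M)"
    then obtain s where s: "u = prod_encode (s, 0)" "s \<in> W M" "sat M s dtop" by (auto simp: W_upd)
    show "\<not> Rel (upd_model A0 M) i (prod_encode (t, 0)) u"
    proof
      assume "Rel (upd_model A0 M) i (prod_encode (t, 0)) u"
      then have "Rel M i t s" using s Rel_upd by simp
      then have "chn M s 0" using 0 s by auto
      then show False using s(3) by (auto simp: sat_dtop)
    qed
  qed
next
  case (Suc n)
  have ex: "\<exists>u\<in>W (upd_model A0 M). Rel (upd_model A0 M) i (prod_encode (t, 0)) u" for i
  proof -
    obtain u where u: "u \<in> W M" "Rel M i t u" using Suc.prems(2) by (simp only: chn.simps) blast
    then have c: "chn M u (Suc n)" using Suc.prems by auto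
    then have "sat M u dtop" by (auto simp: sat_dtop)
    then show ?thesis using u by (intro bexI[of _ "prod_encode (u,0)"]) (auto simp: W_upd Rel_upd)
  qed
  have all: "chn (upd_model A0 M) v n" if vW: "v \<in> W (upd_model A0 M)" and vR: "Rel (upd_model A0 M) i (prod_encode (t, 0)) v" for i v
  proof -
    obtain s where s: "v = prod_encode (s, 0)" "s \<in> W M" "sat M s dtop" using W_upd[THEN iffD1, OF vW] by blast
    then have "Rel M i t s" using vR Rel_upd by simp
    then have "chn M s (Suc n)" using Suc.prems s by auto
    then show ?thesis using Suc.IH s by simp
  qed
  show ?case using ex all by (simp only: chn.simps) blast
qed

lemma upd_root:
  assumes "t \<in> W M" "rootp M t T" "T \<noteq> {}"
  shows "prod_encode (t,0) \<in> W (upd_model A0 M)"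
    and "rootp (upd_model A0 M) (prod_encode (t, 0)) {n. Suc n \<in> T}"
proof -
  obtain n where n: "n \<in> T" using assms(3) by auto
  then obtain u where "u \<in> W M" "Rel M 0 t u" using assms(2) unfolding rootp_def by blast
  then have "sat M t dtop" unfolding sat_dtop by blast
  then show "prod_encode (t,0) \<in> W (upd_model A0 M)" using assms(1) unfolding W_upd by blast
  have a: "\<exists>n\<in>{n. Suc n \<in> T}. chn (upd_model A0 M) v n"
    if vW: "v \<in> W (upd_model A0 M)" and vR: "Rel (upd_model A0 M) i (prod_encode (t, 0)) v" for i v
  proof -
    obtain s where s: "v = prod_encode (s, 0)" "s \<in> W M" "sat M s dtop" using W_upd[THEN iffD1, OF vW] by blast
    then have "Rel M i t s" using vR Rel_upd by simp
    then obtain m where m: "m \<in> T" "chn M s m" using assms(2) s unfolding rootp_def by blast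
    have "m \<noteq> 0"
    proof
      assume "m = 0"
      then have "\<forall>i u. u \<in> W M \<longrightarrow> \<not> Rel M i s u" using m(2) by simp
      then show False using s(3) unfolding sat_dtop by blast
    qed
    then obtain k where k: "m = Suc k" using not0_implies_Suc by blast
    then have "chn (upd_model A0 M) v k" using m(2) s(1,2) upd_chn by blast
    then show ?thesis using m(1) k by blast
  qed
  have b: "\<exists>v\<in>W (upd_model A0 M). Rel (upd_model A0 M) i (prod_encode (t, 0)) v \<and> chn (upd_model A0 M) v k"
    if kT: "Suc k \<in> T" for i k
  proof -
    obtain u where u: "u \<in> W M" "Rel M i t u" "chn M u (Suc k)" using assms(2) kT unfolding rootp_def by blast
    then have "\<exists>w\<in>W M. Rel M 0 u w" by (metis chn.simps(2))
    then have "sat M u dtop" unfolding sat_dtop by blast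
    then have "prod_encode (u,0) \<in> W (upd_model A0 M)" using u(1) unfolding W_upd by blast
    moreover have "Rel (upd_model A0 M) i (prod_encode (t, 0)) (prod_encode (u,0))" using u(2) Rel_upd by simp
    moreover have "chn (upd_model A0 M) (prod_encode (u,0)) k" using u(1,3) upd_chn by blast
    ultimately show ?thesis by blast
  qed
  show "rootp (upd_model A0 M) (prod_encode (t, 0)) {n. Suc n \<in> T}"
    unfolding rootp_def using a b by blast
qed

function tz :: "nat \<Rightarrow> nat" where
  "tz m = (if m = 0 \<or> odd m then 0 else Suc (tz (m div 2)))"
  by pat_completeness auto
termination by (relation "Wellfounded.measure id") auto

declare tz.simps[simp del]

lemma tz_odd: "odd m \<Longrightarrow> tz m = 0"
  by (simp add: tz.simps)

lemma tz_double: "0 < q \<Longrightarrow> tz (2 * q) = Suc (tz q)"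
  by (subst tz.simps) simp

lemma tz_pow: "0 < u \<Longrightarrow> tz (2 ^ a * u) = a + tz u"
  by (induction a) (auto simp: tz_double mult.assoc)

lemma tz_shift: "0 < m \<Longrightarrow> m < 2 ^ K \<Longrightarrow> tz (m + 2 ^ K) = tz m"
proof (induction K arbitrary: m)
  case 0 then show ?case by simp
next
  case (Suc K)
  show ?case
  proof (cases "odd m")
    case True
    then show ?thesis by (simp add: tz_odd)
  next
    case False
    then obtain q where q: "m = 2 * q" by (auto elim: evenE)
    then have "0 < q" "q < 2 ^ K" using Suc.prems by auto
    then have "tz (q + 2 ^ K) = tz q" using Suc.IH by blast
    moreover have "m + 2 ^ Suc K = 2 * (q + 2 ^ K)" using q by simp
    ultimately show ?thesis using q \<open>0 < q\<close> tz_double[of "q + 2 ^ K"] tz_double[of q] by simp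
  qed
qed

definition S0 :: "nat set" where "S0 = {n. even (tz (Suc n))}"

definition Tm :: "nat \<Rightarrow> nat set" where "Tm m = {n. n + m \<in> S0}"

lemma Tm_infinite: "infinite (Tm m)"
  unfolding infinite_nat_iff_unbounded_le
proof
  fix B
  show "\<exists>n\<ge>B. n \<in> Tm m"
    by (rule exI[of _ "2 * (B + m) + m"]) (auto simp: Tm_def S0_def tz_odd)
qed

lemma Tm_Suc: "{n. Suc n \<in> Tm m} = Tm (Suc m)"
  by (auto simp: Tm_def)

lemma decomp2: "0 < (k::nat) \<Longrightarrow> \<exists>a b. k = 2 ^ a * b \<and> odd b"
proof (induction k rule: less_induct)
  case (less k)
  show ?case
  proof (cases "odd k")
    case True then show ?thesis by (intro exI[of _ 0] exI[of _ k]) auto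
  next
    case False
    then obtain q where q: "k = 2 * q" by (auto elim: evenE)
    then have "0 < q" "q < k" using less.prems by auto
    then obtain a b where "q = 2 ^ a * b" "odd b" using less.IH by blast
    then show ?thesis using q by (intro exI[of _ "Suc a"] exI[of _ b]) auto
  qed
qed

lemma Tm_nonperiodic: "0 < k \<Longrightarrow> Tm (n + k) \<noteq> Tm n"
proof
  assume k: "0 < k" and eq: "Tm (n + k) = Tm n"
  obtain a b where ab: "k = 2 ^ a * b" "odd b" using decomp2[OF k] by blast
  define u where "u = 4 * (n + k + b + 1) + (if b mod 4 = 1 then 1 else 3)"
  have uo: "odd u" unfolding u_def by auto
  have bm: "b mod 4 = 1 \<or> b mod 4 = 3" using ab(2) by presburger
  have bd: "b = 4 * (b div 4) + b mod 4" by simp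
  obtain Y where Y: "u + b = 4 * Y + 2"
  proof (cases "b mod 4 = 1")
    case True
    then have "u + b = 4 * (n + k + b + 1 + b div 4) + 2" unfolding u_def using bd by simp
    then show ?thesis using that by blast
  next
    case False
    then have "b mod 4 = 3" using bm by blast
    then have "u + b = 4 * (n + k + b + 1 + b div 4 + 1) + 2" unfolding u_def using bd False by simp
    then show ?thesis using that by blast
  qed
  define q where "q = 2 * Y + 1"
  have q: "u + b = 2 * q" "odd q" unfolding q_def using Y by auto
  have upos: "0 < u" "n < u" unfolding u_def by auto
  have pa: "1 \<le> (2::nat) ^ a" by simp
  define m where "m = 2 ^ a * u - 1"
  have "u \<le> 2 ^ a * u" using pa by simp
  then have m1: "Suc m = 2 ^ a * u" and mn: "n \<le> m" using upos unfolding m_def by linarith+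
  have "Suc (m + k) = 2 ^ a * u + 2 ^ a * b" using m1 ab(1) by simp
  also have "\<dots> = 2 ^ a * (u + b)" by (simp add: add_mult_distrib2)
  also have "\<dots> = 2 ^ Suc a * q" using q(1) by simp
  finally have m2: "Suc (m + k) = 2 ^ Suc a * q" .
  have t1: "tz (Suc m) = a" using m1 uo upos tz_pow[of u a] by (simp add: tz_odd)
  have "0 < q" unfolding q_def by simp
  then have t2: "tz (Suc (m + k)) = Suc a" using m2 q tz_pow[of q "Suc a"] by (simp add: tz_odd)
  have "(m - n) \<in> Tm (n + k) \<longleftrightarrow> (m - n) \<in> Tm n" using eq by simp
  then have "(m + k \<in> S0) = (m \<in> S0)" using mn by (simp add: Tm_def algebra_simps)
  then show False using t1 t2 by (simp add: S0_def)
qed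

lemma Tm_agree: "n \<le> N \<Longrightarrow> n \<in> Tm (2 ^ Suc N) \<longleftrightarrow> n \<in> Tm 0"
proof -
  assume "n \<le> N"
  moreover have "N < 2 ^ N" by (rule less_exp)
  ultimately have "Suc n \<le> 2 ^ N" by linarith
  then have "Suc n < 2 ^ Suc N" by simp
  then have "tz (Suc n + 2 ^ Suc N) = tz (Suc n)" by (intro tz_shift) auto
  then show ?thesis by (simp add: Tm_def S0_def)
qed

definition M0 :: kripke where
  "M0 = \<lparr>W = UNIV, Rel = (\<lambda>i u v. (u = 0 \<and> 0 < v \<and> v - 1 \<in> S0) \<or> (2 \<le> u \<and> v = u - 1)),
         Val = (\<lambda>p. {})\<rparr>"

definition x0 :: pointed where "x0 = (M0, 0)"

definition Uo :: "nat \<Rightarrow> pointed" where "Uo m = (upd A0 ^^ m) x0"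

definition X0 :: "pointed set" where "X0 = range Uo"

lemma chn_M0: "chn M0 (Suc k) k"
proof (induction k)
  case 0 then show ?case by (simp add: M0_def)
next
  case (Suc k)
  have "\<forall>i. \<exists>u\<in>W M0. Rel M0 i (Suc (Suc k)) u" by (auto simp: M0_def)
  moreover have "\<forall>i u. u \<in> W M0 \<and> Rel M0 i (Suc (Suc k)) u \<longrightarrow> chn M0 u k"
    using Suc by (auto simp: M0_def)
  ultimately show ?case by (simp only: chn.simps) blast
qed

lemma root_M0: "rootp M0 0 S0"
  unfolding rootp_def
proof (intro conjI allI impI ballI)
  fix i u assume "u \<in> W M0 \<and> Rel M0 i 0 u"
  then have "0 < u" "u - 1 \<in> S0" by (auto simp: M0_def)
  moreover have "u = Suc (u - 1)" using \<open>0 < u\<close> by simp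
  ultimately show "\<exists>n\<in>S0. chn M0 u n" using chn_M0[of "u - 1"] by metis
next
  fix n i assume "n \<in> S0"
  then show "\<exists>u\<in>W M0. Rel M0 i 0 u \<and> chn M0 u n"
    using chn_M0[of n] by (intro bexI[of _ "Suc n"]) (auto simp: M0_def)
qed

definition G :: "pointed \<Rightarrow> nat set \<Rightarrow> bool" where
  "G x T = (snd x \<in> W (fst x) \<and> (\<forall>p. Val (fst x) p = {}) \<and> rootp (fst x) (snd x) T)"

lemma psat_G: "G x T \<Longrightarrow> psat x a = rsat T a"
  unfolding G_def psat_def using root_sat by blast

lemma rsat_dtop: "rsat T dtop = (T \<noteq> {})"
  by (auto simp: dtop_def)

lemma upd_G:
  assumes "G x T" "T \<noteq> {}"
  shows "G (upd A0 x) {n. Suc n \<in> T}"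
proof -
  have p: "psat x dtop" using psat_G[OF assms(1)] rsat_dtop assms(2) by simp
  have the0: "(THE \<sigma>. \<sigma> \<in> Des A0 \<and> psat x (pre A0 \<sigma>)) = 0"
    using p by (simp add: A0_def)
  have u: "upd A0 x = (upd_model A0 (fst x), prod_encode (snd x, 0))"
    unfolding upd_def the0 ..
  have g: "snd x \<in> W (fst x)" "\<forall>p. Val (fst x) p = {}" "rootp (fst x) (snd x) T"
    using assms(1) unfolding G_def by auto
  show ?thesis unfolding u G_def using upd_root[OF g(1) g(3) assms(2)] Val_upd[OF g(2)] by simp
qed

lemma Uo_Suc: "Uo (Suc m) = upd A0 (Uo m)"
  by (simp add: Uo_def)

lemma G_U: "G (Uo m) (Tm m)"
proof (induction m)
  case 0
  have "Tm 0 = S0" by (simp add: Tm_def)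
  then show ?case using root_M0 by (simp add: G_def Uo_def x0_def M0_def)
next
  case (Suc m)
  have "Tm m \<noteq> {}" using Tm_infinite[of m] by auto
  then show ?case using upd_G[OF Suc] Tm_Suc Uo_Suc by simp
qed

lemma psat_U: "psat (Uo m) a = rsat (Tm m) a"
  using psat_G[OF G_U] .

fun dia :: "nat \<Rightarrow> fm" where
  "dia 0 = Top" | "dia (Suc n) = Neg (Box 0 (Neg (dia n)))"

fun bb :: "nat \<Rightarrow> fm" where
  "bb 0 = Neg Top" | "bb (Suc n) = Box 0 (bb n)"

definition phi :: "nat \<Rightarrow> fm" where
  "phi n = Neg (Box 0 (Neg (Conj (dia n) (bb (Suc n)))))"

lemma csat_dia: "csat m (dia n) = (n \<le> m)"
  by (induction n arbitrary: m) (auto split: nat.splits)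

lemma csat_bb: "csat m (bb n) = (m < n)"
  by (induction n arbitrary: m) (auto split: nat.splits)

lemma csat_cc: "csat m (Conj (dia n) (bb (Suc n))) = (m = n)"
  using csat_dia[of m n] csat_bb[of m "Suc n"] by (simp only: csat.simps(4)) arith

lemma rsat_phi: "rsat T (phi n) = (n \<in> T)"
  unfolding phi_def by (simp only: rsat.simps(3,5) csat.simps(3) csat_cc) blast

lemma lang_phi: "in_lang {0} {0} (phi n)"
proof -
  have "in_lang {0} {0} (dia k)" for k by (induction k) auto
  moreover have "in_lang {0} {0} (bb k)" for k by (induction k) auto
  ultimately show ?thesis by (simp add: phi_def)
qed

abbreviation "Ph \<equiv> ({0} :: nat set)"

lemma meq_U: "meq Ph Ph (Uo k) (Uo m) \<longleftrightarrow> Tm k = Tm m"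
proof
  assume "meq Ph Ph (Uo k) (Uo m)"
  then have "rsat (Tm k) (phi n) = rsat (Tm m) (phi n)" for n
    using lang_phi[of n] psat_U unfolding meq_def by blast
  then show "Tm k = Tm m" by (auto simp: rsat_phi)
qed (simp add: meq_def psat_U)

lemma cls_U: "cls Ph Ph X0 (Uo m) = Uo ` {j. Tm j = Tm m}"
  unfolding cls_def X0_def using meq_U by auto

lemma fmap_U: "fmap Ph Ph X0 A0 (cls Ph Ph X0 (Uo m)) = cls Ph Ph X0 (Uo (Suc m))"
proof -
  have "\<exists>x. x \<in> cls Ph Ph X0 (Uo m)" using cls_U by auto
  define xs where "xs = (SOME x. x \<in> cls Ph Ph X0 (Uo m))"
  have "xs \<in> cls Ph Ph X0 (Uo m)" unfolding xs_def by (rule someI_ex) fact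
  then have "xs \<in> Uo ` {j. Tm j = Tm m}" by (simp only: cls_U)
  then obtain j where j: "xs = Uo j" "Tm j = Tm m" by blast
  have "Tm (Suc j) = Tm (Suc m)" using j(2) Tm_Suc by metis
  have "fmap Ph Ph X0 A0 (cls Ph Ph X0 (Uo m)) = cls Ph Ph X0 (upd A0 xs)" unfolding fmap_def xs_def ..
  also have "\<dots> = cls Ph Ph X0 (Uo (Suc j))" using j(1) Uo_Suc by simp
  also have "\<dots> = cls Ph Ph X0 (Uo (Suc m))" unfolding cls_U using \<open>Tm (Suc j) = Tm (Suc m)\<close> by simp
  finally show ?thesis .
qed

lemma iter_U: "(fmap Ph Ph X0 A0 ^^ n) (cls Ph Ph X0 x0) = cls Ph Ph X0 (Uo n)"
proof (induction n)
  case 0 then show ?case by (simp add: Uo_def)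
next
  case (Suc n) then show ?case using fmap_U by simp
qed

lemma nonper: "\<not> periodic_orbit (fmap Ph Ph X0 A0) (cls Ph Ph X0 x0)"
proof
  assume "periodic_orbit (fmap Ph Ph X0 A0) (cls Ph Ph X0 x0)"
  then obtain n k where k: "0 < k" "cls Ph Ph X0 (Uo (n + k)) = cls Ph Ph X0 (Uo n)"
    unfolding periodic_orbit_def iter_U by blast
  have "Uo n \<in> cls Ph Ph X0 (Uo n)" unfolding cls_U by auto
  then have "Uo n \<in> cls Ph Ph X0 (Uo (n + k))" using k(2) by simp
  then have "Uo n \<in> Uo ` {j. Tm j = Tm (n + k)}" by (simp only: cls_U)
  then obtain j where "Uo n = Uo j" "Tm j = Tm (n + k)" by blast
  moreover have "Tm n = Tm j" using meq_U[of n j] \<open>Uo n = Uo j\<close> by (simp add: meq_def)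
  ultimately show False using Tm_nonperiodic[OF k(1), of n] by simp
qed

fun depth :: "fm \<Rightarrow> nat" where
  "depth Top = 0" | "depth (Atom p) = 0" | "depth (Neg a) = depth a"
| "depth (Conj a b) = max (depth a) (depth b)" | "depth (Box i a) = Suc (depth a)"

lemma csat_min: "csat n a = csat (min n (depth a)) a"
proof (induction a arbitrary: n)
  case (Conj a b)
  let ?d = "max (depth a) (depth b)"
  have e1: "min (min n ?d) (depth a) = min n (depth a)" by (simp add: min_def max_def)
  have e2: "min (min n ?d) (depth b) = min n (depth b)" by (simp add: min_def max_def)
  have "csat (min n ?d) a = csat (min (min n ?d) (depth a)) a" by (rule Conj.IH(1))
  also have "\<dots> = csat (min n (depth a)) a" by (simp only: e1)
  also have "\<dots> = csat n a" by (rule Conj.IH(1)[symmetric])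
  finally have 1: "csat (min n ?d) a = csat n a" .
  have "csat (min n ?d) b = csat (min (min n ?d) (depth b)) b" by (rule Conj.IH(2))
  also have "\<dots> = csat (min n (depth b)) b" by (simp only: e2)
  also have "\<dots> = csat n b" by (rule Conj.IH(2)[symmetric])
  finally have 2: "csat (min n ?d) b = csat n b" .
  show ?case by (simp only: csat.simps depth.simps 1 2)
next
  case (Box i a)
  show ?case
  proof (cases n)
    case 0 then show ?thesis by simp
  next
    case (Suc m)
    have "min n (depth (Box i a)) = Suc (min m (depth a))" using Suc by simp
    then have "csat (min n (depth (Box i a))) (Box i a) = csat (min m (depth a)) a" by simp
    also have "\<dots> = csat m a" by (rule Box.IH[symmetric])
    also have "\<dots> = csat n (Box i a)" using Suc by simp
    finally show ?thesis by simp
  qed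
next
  case (Neg a)
  show ?case using Neg.IH[of n] by (simp only: csat.simps depth.simps)
qed auto

lemma rsat_agree:
  assumes "infinite T" "infinite T'" "\<forall>n<depth a. n \<in> T \<longleftrightarrow> n \<in> T'"
  shows "rsat T a = rsat T' a"
  using assms(3)
proof (induction a)
  case (Box i a)
  have h: "\<forall>n\<le>depth a. n \<in> T \<longleftrightarrow> n \<in> T'" using Box.prems by auto
  have dir: "(\<forall>n\<in>A. csat n a) \<Longrightarrow> (\<forall>n\<in>B. csat n a)"
    if iA: "infinite A" and hAB: "\<forall>n\<le>depth a. n \<in> A \<longleftrightarrow> n \<in> B" for A B
  proof (intro ballI)
    fix n assume all: "\<forall>n\<in>A. csat n a" and nB: "n \<in> B"
    show "csat n a"
    proof (cases "n \<le> depth a")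
      case True then have "n \<in> A" using hAB nB by blast
      then show ?thesis using all by blast
    next
      case False
      obtain m where m: "m \<ge> depth a" "m \<in> A" using iA unfolding infinite_nat_iff_unbounded_le by blast
      have "csat m a" using all m(2) by blast
      have e: "min m (depth a) = depth a" using m(1) by simp
      have e2: "min n (depth a) = depth a" using False by simp
      have "csat (depth a) a" using csat_min[of m a] e \<open>csat m a\<close> by metis
      then show ?thesis using csat_min[of n a] e2 by metis
    qed
  qed
  have h': "\<forall>n\<le>depth a. n \<in> T' \<longleftrightarrow> n \<in> T" using h by blast
  have "(\<forall>n\<in>T. csat n a) = (\<forall>n\<in>T'. csat n a)"
    using dir[OF assms(1) h] dir[OF assms(2) h'] by blast
  then show ?case by (simp only: rsat.simps)
qed auto

definition OP :: "nat set \<Rightarrow> nat set \<Rightarrow> pointed set \<Rightarrow> pointed set set \<Rightarrow> bool" where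
  "OP Phi I X U = (U \<subseteq> mspace Phi I X \<and>
      (\<forall>c\<in>U. \<exists>a. in_lang Phi I a \<and> c \<in> basic Phi I X a \<and> basic Phi I X a \<subseteq> U))"

lemma basic_conj: "basic Phi I X (Conj a b) \<subseteq> basic Phi I X a \<inter> basic Phi I X b"
proof
  fix c assume "c \<in> basic Phi I X (Conj a b)"
  then obtain x where x: "c = cls Phi I X x" "x \<in> X" "psat x (Conj a b)" unfolding basic_def by blast
  then have "psat x a" "psat x b" by (simp_all add: psat_def)
  then show "c \<in> basic Phi I X a \<inter> basic Phi I X b" using x(1,2) unfolding basic_def by blast
qed

lemma OP_int: assumes S: "OP Phi I X S" and T: "OP Phi I X T" shows "OP Phi I X (S \<inter> T)"
  unfolding OP_def
proof (intro conjI ballI)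
  show "S \<inter> T \<subseteq> mspace Phi I X" using S unfolding OP_def by blast
  fix c assume c: "c \<in> S \<inter> T"
  obtain a where a: "in_lang Phi I a" "c \<in> basic Phi I X a" "basic Phi I X a \<subseteq> S"
    using S c unfolding OP_def by blast
  obtain b where b: "in_lang Phi I b" "c \<in> basic Phi I X b" "basic Phi I X b \<subseteq> T"
    using T c unfolding OP_def by blast
  obtain x where x: "x \<in> X" "c = cls Phi I X x" "psat x a" using a(2) unfolding basic_def by blast
  obtain y where y: "y \<in> X" "c = cls Phi I X y" "psat y b" using b(2) unfolding basic_def by blast
  have "x \<in> cls Phi I X x" using x(1) by (simp add: cls_def meq_def)
  then have "x \<in> cls Phi I X y" using x(2) y(2) by simp
  then have "meq Phi I x y" by (simp add: cls_def)
  then have "psat x b" using y(3) b(1) unfolding meq_def by blast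
  then have "psat x (Conj a b)" using x(3) by (simp add: psat_def)
  then have "c \<in> basic Phi I X (Conj a b)" using x(1,2) unfolding basic_def by blast
  moreover have "basic Phi I X (Conj a b) \<subseteq> S \<inter> T" using basic_conj a(3) b(3) by blast
  moreover have "in_lang Phi I (Conj a b)" using a(1) b(1) by simp
  ultimately show "\<exists>a. in_lang Phi I a \<and> c \<in> basic Phi I X a \<and> basic Phi I X a \<subseteq> S \<inter> T" by blast
qed

lemma OP_Union: assumes "\<forall>K\<in>KK. OP Phi I X K" shows "OP Phi I X (\<Union>KK)"
  unfolding OP_def
proof (intro conjI ballI)
  show "\<Union>KK \<subseteq> mspace Phi I X" using assms unfolding OP_def by blast
  fix c assume "c \<in> \<Union>KK"
  then obtain K where K: "K \<in> KK" "c \<in> K" by blast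
  then obtain a where a: "in_lang Phi I a" "c \<in> basic Phi I X a" "basic Phi I X a \<subseteq> K"
    using assms unfolding OP_def by blast
  then show "\<exists>a. in_lang Phi I a \<and> c \<in> basic Phi I X a \<and> basic Phi I X a \<subseteq> \<Union>KK" using K(1) by blast
qed

lemma istop: "istopology (OP Phi I X)"
  unfolding istopology_def using OP_int OP_Union by blast

lemma stone_OP: "stone Phi I X = topology (OP Phi I X)"
  unfolding stone_def OP_def[abs_def] ..

lemma openin_stone: "openin (stone Phi I X) U \<longleftrightarrow> U \<subseteq> mspace Phi I X \<and>
      (\<forall>c\<in>U. \<exists>a. in_lang Phi I a \<and> c \<in> basic Phi I X a \<and> basic Phi I X a \<subseteq> U)"
  unfolding stone_OP topology_inverse'[OF istop] OP_def ..

lemma basic_Top: "basic Phi I X Top = mspace Phi I X"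
  by (auto simp: basic_def mspace_def psat_def)

lemma mspace_top: "mspace Phi I X \<subseteq> topspace (stone Phi I X)"
proof -
  have "openin (stone Phi I X) (mspace Phi I X)"
    unfolding openin_stone using basic_Top by (metis in_lang.simps(1) order_refl)
  then show ?thesis by (rule openin_subset)
qed

lemma limit_crit:
  assumes "l \<in> mspace Phi I X"
    and "\<And>a. in_lang Phi I a \<Longrightarrow> l \<in> basic Phi I X a \<Longrightarrow> eventually (\<lambda>n. s n \<in> basic Phi I X a) sequentially"
  shows "limitin (stone Phi I X) s l sequentially"
  unfolding limitin_def
proof (intro conjI allI impI)
  show "l \<in> topspace (stone Phi I X)" using assms(1) mspace_top by blast
  fix U assume "openin (stone Phi I X) U \<and> l \<in> U"
  then obtain a where a: "in_lang Phi I a" "l \<in> basic Phi I X a" "basic Phi I X a \<subseteq> U"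
    unfolding openin_stone by blast
  show "eventually (\<lambda>n. s n \<in> U) sequentially"
    by (rule eventually_mono[OF assms(2)[OF a(1) a(2)]]) (use a(3) in blast)
qed

lemma recur: "recurrent (stone Ph Ph X0) (fmap Ph Ph X0 A0) ((fmap Ph Ph X0 A0 ^^ 0) (cls Ph Ph X0 x0))"
proof -
  let ?c = "cls Ph Ph X0 x0"
  have c0: "?c = cls Ph Ph X0 (Uo 0)" by (simp add: Uo_def)
  have sm: "strict_mono (\<lambda>n::nat. (2::nat) ^ Suc n)" unfolding strict_mono_def by simp
  have lim: "limitin (stone Ph Ph X0) (\<lambda>n. (fmap Ph Ph X0 A0 ^^ (2 ^ Suc n)) ?c) ?c sequentially"
  proof (rule limit_crit)
    have "cls Ph Ph X0 (Uo 0) \<in> mspace Ph Ph X0" unfolding mspace_def X0_def by blast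
    then show "?c \<in> mspace Ph Ph X0" using c0 by simp
    fix a assume la: "in_lang Ph Ph a" and ca: "?c \<in> basic Ph Ph X0 a"
    obtain x where x: "x \<in> X0" "?c = cls Ph Ph X0 x" "psat x a" using ca unfolding basic_def by blast
    have "Uo 0 \<in> cls Ph Ph X0 (Uo 0)" unfolding cls_U by auto
    then have "Uo 0 \<in> cls Ph Ph X0 x" using x(2) c0 by simp
    then have "meq Ph Ph (Uo 0) x" by (simp add: cls_def)
    then have "psat (Uo 0) a" using x(3) la unfolding meq_def by blast
    then have r0: "rsat (Tm 0) a" by (simp add: psat_U)
    show "eventually (\<lambda>n. (fmap Ph Ph X0 A0 ^^ (2 ^ Suc n)) ?c \<in> basic Ph Ph X0 a) sequentially"
    proof (rule eventually_sequentiallyI[of "depth a"])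
      fix n assume "depth a \<le> n"
      then have "\<forall>k<depth a. k \<in> Tm (2 ^ Suc n) \<longleftrightarrow> k \<in> Tm 0" using Tm_agree by auto
      then have "rsat (Tm (2 ^ Suc n)) a" using rsat_agree[OF Tm_infinite Tm_infinite] r0 by blast
      then have "psat (Uo (2 ^ Suc n)) a" by (simp add: psat_U)
      moreover have "Uo (2 ^ Suc n) \<in> X0" by (simp add: X0_def)
      ultimately show "(fmap Ph Ph X0 A0 ^^ (2 ^ Suc n)) ?c \<in> basic Ph Ph X0 a"
        unfolding iter_U basic_def by blast
    qed
  qed
  show ?thesis unfolding recurrent_def omega_set_def using sm lim by auto
qed

theorem proposition10:
  shows "\<exists>(Phi :: nat set) (I :: nat set) (Lam :: fm set) (X :: pointed set) (A :: amodel) (x :: pointed).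
     finite Phi \<and> Phi \<noteq> {} \<and> finite I \<and> I \<noteq> {}
   \<and> normal_logic Phi I Lam
   \<and> model_space Phi I Lam X
   \<and> clean Phi I Lam X A \<and> finite_am A \<and> static_am A \<and> \<not> boolean_am A
   \<and> x \<in> X
   \<and> \<not> periodic_orbit (fmap Phi I X A) (cls Phi I X x)
   \<and> (\<exists>n. recurrent (stone Phi I X) (fmap Phi I X A) ((fmap Phi I X A ^^ n) (cls Phi I X x)))"
proof -
  have ms: "model_space Ph Ph (Lam0 Ph Ph) X0"
    unfolding model_space_def
  proof (intro conjI ballI)
    fix x assume "x \<in> X0"
    then obtain m where m: "x = Uo m" unfolding X0_def by blast
    show "snd x \<in> W (fst x)" using G_U[of m] m by (simp add: G_def)
    fix a assume "a \<in> Lam0 Ph Ph"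
    then show "psat x a" by (simp add: Lam0_def psat_def)
  qed
  have uniq: "\<exists>!\<sigma>. \<sigma> \<in> Des A0 \<and> psat x (pre A0 \<sigma>)" if xX: "x \<in> X0" for x
  proof -
    obtain m where m: "x = Uo m" using xX unfolding X0_def by blast
    have "Tm m \<noteq> {}" using Tm_infinite[of m] by auto
    then have "psat x dtop" using m psat_U rsat_dtop by simp
    then show ?thesis by (auto simp: A0_def)
  qed
  have clo: "upd A0 x \<in> X0" if xX: "x \<in> X0" for x
  proof -
    obtain m where m: "x = Uo m" using xX unfolding X0_def by blast
    then show ?thesis using Uo_Suc[of m] unfolding X0_def by (metis rangeI)
  qed
  have cl: "clean Ph Ph (Lam0 Ph Ph) X0 A0"
    unfolding clean_def
  proof (intro conjI ballI)
    show "Des A0 \<noteq> {}" "Des A0 \<subseteq> Act A0" by (auto simp: A0_def)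
    show "finite ((\<lambda>\<sigma>. {b. in_lang Ph Ph b \<and> lequiv (Lam0 Ph Ph) (pre A0 \<sigma>) b}) ` Act A0)"
      by (simp add: A0_def)
    fix \<sigma> assume "\<sigma> \<in> Act A0"
    then show "in_lang Ph Ph (pre A0 \<sigma>)" "post_ok Ph (post A0 \<sigma>)"
      by (auto simp: A0_def dtop_def post_ok_def)
  next
    fix x assume "x \<in> X0"
    then show "\<exists>!\<sigma>. \<sigma> \<in> Des A0 \<and> psat x (pre A0 \<sigma>)" "upd A0 x \<in> X0" using uniq clo by auto
  qed
  have am: "finite_am A0" "static_am A0" "\<not> boolean_am A0"
    by (auto simp: finite_am_def static_am_def boolean_am_def A0_def dtop_def)
  have x0X: "x0 \<in> X0" unfolding X0_def by (metis Uo_def funpow_0 rangeI)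
  show ?thesis
    apply (rule exI[of _ Ph], rule exI[of _ Ph], rule exI[of _ "Lam0 Ph Ph"], rule exI[of _ X0],
           rule exI[of _ A0], rule exI[of _ x0])
    using normal_Lam0 ms cl am x0X nonper recur by blast
qed

end
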